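(* Let $\mathcal{X}$ be finite, let $U=(U_n)$ and $V=(V_n)$ be channel sequences with $U_n:\mathcal{X}^n\rightsquigarrow\mathcal{Y}_n$, $V_n:\mathcal{X}^n\rightsquigarrow\mathcal{Z}_n$ ($\mathcal{Y}_n,\mathcal{Z}_n$ countable), and $V_n=f_n(U_n)$ for functions $f_n:\mathcal{Y}_n\to\mathcal{Z}_n$. Suppose $\mathcal{Y}_n=\mathcal{A}_n\sqcup\mathcal{B}_n$, $\mathcal{Z}_n=\mathcal{A}'_n\sqcup\mathcal{B}'_n$ with $f_n(\mathcal{A}_n)=\mathcal{A}'_n$ and $f_n$ bijective from $\mathcal{A}_n$ onto $\mathcal{A}'_n$. Let $\beta_n(x)=\Pr_{U_n(y|x)}[y\in\mathcal{B}_n]$, $\overline{\beta}_n=\max_x\beta_n(x)$, and suppose $\lim_{n\to\infty}\overline{\beta}_n=0$. Then $\mathbf{C}(U)=\mathbf{C}(V)$. If, in addition, one of $\mathbf{I}(U)$, $\mathbf{I}(V)$ exists, then both exist and $\mathbf{I}(U)=\mathbf{I}(V)$. Moreover, $U$ is strictly information stable if and only if $V$ is.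
   Context: A channel $W:\mathcal{A}\rightsquigarrow\mathcal{B}$ is a family of probability distributions $W(\cdot|a)$ on $\mathcal{B}$; $f(W)(c|a)=\sum_{b\in f^{-1}(c)}W(b|a)$. For a distribution $p$: $p\circ W(a,b)=p(a)W(b|a)$, $p\bullet W(b)=\sum_a p\circ W(a,b)$; $\mathbf{i}(W,p,a,b)=\log_2\frac{W(b|a)}{p\bullet W(b)}$ if $W(b|a)>0$ and $p\bullet W(b)>0$, else $0$; $\mathbf{I}(W,p)=\mathbb{E}_{p\circ W}[\mathbf{i}]$, $\mathbf{I}(W)=\max_p\mathbf{I}(W,p)$. For a channel sequence $V$, $\mathbf{I}(V)=\lim_n\mathbf{I}(V_n)/n$ when it exists. A $(W,M,\varepsilon)$-coding scheme: $M$ distinct inputs $x_1,\dots,x_M$ and disjoint output sets $\mathcal{R}_i$ with $\sum_{y\notin\mathcal{R}_i}W(y|x_i)\le\varepsilon$ for all $i$. $R\ge0$ is achievable if for each $\varepsilon>0$ there is $n_0$ with a $(V_n,\lceil2^{nR}\rceil,\varepsilon)$-coding scheme for all $n\ge n_0$; $\mathbf{C}(V)$ is the supremum of achievable rates. $V$ is strictly information stable if $\mathbf{I}(V)$ exists and there are distributions $p^*_n$ on $\mathcal{X}^n$ with $\lim_n\Pr_{p^*_n\circ V_n}\big[|\mathbf{i}(V_n,p^*_n,x,y)/n-\mathbf{I}(V)|>\delta\big]=0$ for every $\delta>0$. *)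

theory Defs
  imports "HOL-Probability.Probability"
begin

text \<open>A channel from an input type 'a to a countable output type 'b is a map
  'a \<Rightarrow> 'b pmf; W(b|a) = pmf (W a) b.  Inputs of block length n are lists of
  length n over the finite alphabet 'x.\<close>

definition inputs :: "nat \<Rightarrow> 'x list set" where
  "inputs n = {xs. length xs = n}"

definition out_dist :: "'a pmf \<Rightarrow> ('a \<Rightarrow> 'b pmf) \<Rightarrow> 'b pmf" where
  "out_dist p W = bind_pmf p W"

definition joint_dist :: "'a pmf \<Rightarrow> ('a \<Rightarrow> 'b pmf) \<Rightarrow> ('a \<times> 'b) pmf" where
  "joint_dist p W = bind_pmf p (\<lambda>a. map_pmf (\<lambda>b. (a, b)) (W a))"

definition info_dens :: "('a \<Rightarrow> 'b pmf) \<Rightarrow> 'a pmf \<Rightarrow> 'a \<Rightarrow> 'b \<Rightarrow> real" where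
  "info_dens W p a b =
     (if pmf (W a) b > 0 \<and> pmf (out_dist p W) b > 0
      then log 2 (pmf (W a) b / pmf (out_dist p W) b) else 0)"

definition mutual_info :: "('a \<Rightarrow> 'b pmf) \<Rightarrow> 'a pmf \<Rightarrow> real" where
  "mutual_info W p = measure_pmf.expectation (joint_dist p W) (\<lambda>(a, b). info_dens W p a b)"

definition chan_info :: "('x list \<Rightarrow> 'b pmf) \<Rightarrow> nat \<Rightarrow> real" where
  "chan_info W n = Sup {mutual_info W p | p. set_pmf p \<subseteq> inputs n}"

definition info_rate_exists :: "(nat \<Rightarrow> 'x list \<Rightarrow> 'b pmf) \<Rightarrow> bool" where
  "info_rate_exists V \<longleftrightarrow> convergent (\<lambda>n. chan_info (V n) n / real n)"

definition info_rate :: "(nat \<Rightarrow> 'x list \<Rightarrow> 'b pmf) \<Rightarrow> real" where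
  "info_rate V = lim (\<lambda>n. chan_info (V n) n / real n)"

definition coding_scheme :: "('a \<Rightarrow> 'b pmf) \<Rightarrow> 'a set \<Rightarrow> nat \<Rightarrow> real \<Rightarrow> bool" where
  "coding_scheme W S M \<epsilon> \<longleftrightarrow>
     (\<exists>x :: nat \<Rightarrow> 'a. \<exists>R :: nat \<Rightarrow> 'b set.
        inj_on x {..<M} \<and> x ` {..<M} \<subseteq> S \<and> disjoint_family_on R {..<M} \<and>
        (\<forall>i<M. measure_pmf.prob (W (x i)) (- R i) \<le> \<epsilon>))"

definition achievable :: "(nat \<Rightarrow> 'x list \<Rightarrow> 'b pmf) \<Rightarrow> real \<Rightarrow> bool" where
  "achievable V R \<longleftrightarrow> R \<ge> 0 \<and>
     (\<forall>\<epsilon>>0. \<exists>n0. \<forall>n\<ge>n0.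
        coding_scheme (V n) (inputs n) (nat \<lceil>2 powr (real n * R)\<rceil>) \<epsilon>)"

definition capacity :: "(nat \<Rightarrow> 'x list \<Rightarrow> 'b pmf) \<Rightarrow> real" where
  "capacity V = Sup {R. achievable V R}"

definition strictly_info_stable :: "(nat \<Rightarrow> 'x list \<Rightarrow> 'b pmf) \<Rightarrow> bool" where
  "strictly_info_stable V \<longleftrightarrow> info_rate_exists V \<and>
     (\<exists>p :: nat \<Rightarrow> 'x list pmf. (\<forall>n. set_pmf (p n) \<subseteq> inputs n) \<and>
        (\<forall>\<delta>>0. (\<lambda>n. measure_pmf.prob (joint_dist (p n) (V n))
                   {(x, y). \<bar>info_dens (V n) (p n) x y / real n - info_rate V\<bar> > \<delta>})
                 \<longlonglongrightarrow> 0))"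

end

theory Submission
  imports Defs
begin


lemma nn_bound_integrable:
  fixes f :: "'a \<Rightarrow> real" and M :: "'a pmf"
  assumes nn: "\<And>x. x \<in> set_pmf M \<Longrightarrow> 0 \<le> f x"
    and le: "(\<integral>\<^sup>+x. ennreal (f x) \<partial>M) \<le> ennreal c" and c: "0 \<le> c"
  shows "integrable M f" "integral\<^sup>L M f \<le> c"
proof -
  have ae: "AE x in M. 0 \<le> f x" using nn by (simp add: AE_measure_pmf_iff)
  show int: "integrable M f"
    by (rule integrableI_nonneg) (use ae le in \<open>auto simp: top.not_eq_extremum le_less_trans\<close>)
  have "ennreal (integral\<^sup>L M f) = (\<integral>\<^sup>+x. ennreal (f x) \<partial>M)"
    by (rule nn_integral_eq_integral[symmetric]) (use int ae in auto)
  also note le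
  finally have "ennreal (integral\<^sup>L M f) \<le> ennreal c" .
  moreover have "0 \<le> integral\<^sup>L M f" using ae by (simp add: integral_nonneg_AE)
  ultimately show "integral\<^sup>L M f \<le> c"
    using c by (simp add: ennreal_le_iff)
qed

lemma set_joint: "set_pmf (joint_dist p W) = {(a,b). a \<in> set_pmf p \<and> b \<in> set_pmf (W a)}"
  by (auto simp: joint_dist_def)

lemma map_fst_joint: "map_pmf fst (joint_dist p W) = p"
  by (simp add: joint_dist_def map_bind_pmf map_pmf_comp o_def bind_return_pmf' flip: map_pmf_def)

lemma map_snd_joint: "map_pmf snd (joint_dist p W) = out_dist p W"
  by (simp add: joint_dist_def out_dist_def map_bind_pmf map_pmf_comp o_def)

lemma out_ge:
  assumes fin: "finite (set_pmf p)" and a: "a \<in> set_pmf p"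
  shows "pmf p a * pmf (W a) b \<le> pmf (out_dist p W) b"
proof -
  have "pmf (out_dist p W) b = (\<Sum>x\<in>set_pmf p. pmf (W x) b * pmf p x)"
    unfolding out_dist_def pmf_bind by (rule integral_measure_pmf_real) (use fin in auto)
  also have "\<dots> \<ge> pmf (W a) b * pmf p a"
    by (rule member_le_sum) (use a fin in auto)
  finally show ?thesis by (simp add: mult.commute)
qed

lemma out_pos:
  assumes fin: "finite (set_pmf p)" and a: "a \<in> set_pmf p" and b: "b \<in> set_pmf (W a)"
  shows "0 < pmf (out_dist p W) b"
proof -
  have "0 < pmf p a * pmf (W a) b" using a b by (simp add: pmf_positive)
  also note out_ge[OF fin a]
  finally show ?thesis .
qed

lemma info_dens_supp:
  assumes fin: "finite (set_pmf p)" and a: "a \<in> set_pmf p" and b: "b \<in> set_pmf (W a)"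
  shows "info_dens W p a b = log 2 (pmf (W a) b / pmf (out_dist p W) b)"
  using out_pos[where p=p and a=a and W=W and b=b, OF assms] b by (simp add: info_dens_def pmf_positive)

lemma info_dens_upper:
  assumes fin: "finite (set_pmf p)" and a: "a \<in> set_pmf p" and b: "b \<in> set_pmf (W a)"
  shows "info_dens W p a b \<le> - log 2 (pmf p a)"
proof -
  have pa: "0 < pmf p a" using a by (simp add: pmf_positive)
  have wb: "0 < pmf (W a) b" using b by (simp add: pmf_positive)
  have q: "0 < pmf (out_dist p W) b" by (rule out_pos[where p=p and a=a and W=W and b=b, OF assms])
  have "pmf (W a) b / pmf (out_dist p W) b \<le> 1 / pmf p a"
    using out_ge[OF fin a, of W b] pa q wb by (simp add: field_simps)
  hence "log 2 (pmf (W a) b / pmf (out_dist p W) b) \<le> log 2 (1 / pmf p a)"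
    using pa q wb by (intro log_le_cancel_iff[THEN iffD2]) auto
  thus ?thesis using info_dens_supp[where p=p and a=a and W=W and b=b, OF assms] pa by (simp add: log_divide)
qed

lemma log_le_lin: "0 < (x::real) \<Longrightarrow> log 2 x \<le> (x - 1) / ln 2"
  using ln_le_minus_one[of x] by (simp add: log_def divide_right_mono)

lemma info_dens_lower:
  assumes fin: "finite (set_pmf p)" and a: "a \<in> set_pmf p" and b: "b \<in> set_pmf (W a)"
  shows "- info_dens W p a b \<le> (pmf (out_dist p W) b / pmf (W a) b - 1) / ln 2"
proof -
  have wb: "0 < pmf (W a) b" using b by (simp add: pmf_positive)
  have q: "0 < pmf (out_dist p W) b" by (rule out_pos[where p=p and a=a and W=W and b=b, OF assms])
  have "- info_dens W p a b = log 2 (pmf (out_dist p W) b / pmf (W a) b)"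
    using info_dens_supp[where p=p and a=a and W=W and b=b, OF assms] wb q by (simp add: log_divide)
  also have "\<dots> \<le> (pmf (out_dist p W) b / pmf (W a) b - 1) / ln 2" by (rule log_le_lin) (use wb q in auto)
  finally show ?thesis .
qed



lemma nn_ratio_le1:
  fixes W :: "'a \<Rightarrow> 'b pmf" and g :: "'b \<Rightarrow> real"
  assumes g: "\<And>b. 0 \<le> g b"
  shows "(\<integral>\<^sup>+b. ennreal (g b / pmf (W a) b) \<partial>W a) \<le> (\<integral>\<^sup>+b. ennreal (g b) \<partial>count_space UNIV)"
proof -
  have "(\<integral>\<^sup>+b. ennreal (g b / pmf (W a) b) \<partial>W a) =
        (\<integral>\<^sup>+b. ennreal (pmf (W a) b) * ennreal (g b / pmf (W a) b) \<partial>count_space UNIV)"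
    by (rule nn_integral_measure_pmf)
  also have "\<dots> \<le> (\<integral>\<^sup>+b. ennreal (g b) \<partial>count_space UNIV)"
  proof (rule nn_integral_mono)
    fix b
    have "pmf (W a) b * (g b / pmf (W a) b) \<le> g b"
      using g[of b] by (cases "pmf (W a) b = 0") auto
    thus "ennreal (pmf (W a) b) * ennreal (g b / pmf (W a) b) \<le> ennreal (g b)"
      using g[of b] by (simp add: ennreal_mult[symmetric])
  qed
  finally show ?thesis .
qed

lemma pmf_total: "(\<integral>\<^sup>+b. ennreal (pmf q b) \<partial>count_space UNIV) = 1"
  by (simp add: nn_integral_pmf measure_pmf.emeasure_space_1[simplified])

lemma ratio_nn:
  fixes W :: "'a \<Rightarrow> 'b pmf"
  shows "(\<integral>\<^sup>+x. ennreal (pmf (out_dist p W) (snd x) / pmf (W (fst x)) (snd x)) \<partial>joint_dist p W) \<le> 1"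
proof -
  have "(\<integral>\<^sup>+x. ennreal (pmf (out_dist p W) (snd x) / pmf (W (fst x)) (snd x)) \<partial>joint_dist p W)
     = (\<integral>\<^sup>+a. \<integral>\<^sup>+b. ennreal (pmf (out_dist p W) b / pmf (W a) b) \<partial>W a \<partial>p)"
    by (simp add: joint_dist_def)
  also have "\<dots> \<le> (\<integral>\<^sup>+a. 1 \<partial>p)"
    by (rule nn_integral_mono) (metis nn_ratio_le1 pmf_total pmf_nonneg)
  finally show ?thesis by simp
qed

lemma ratio_integrable:
  fixes W :: "'a \<Rightarrow> 'b pmf"
  shows "integrable (joint_dist p W) (\<lambda>x. pmf (out_dist p W) (snd x) / pmf (W (fst x)) (snd x))"
    "(\<integral>x. pmf (out_dist p W) (snd x) / pmf (W (fst x)) (snd x) \<partial>joint_dist p W) \<le> 1"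
proof -
  have le: "(\<integral>\<^sup>+x. ennreal (pmf (out_dist p W) (snd x) / pmf (W (fst x)) (snd x)) \<partial>joint_dist p W) \<le> ennreal 1"
    using ratio_nn[of p W] by simp
  show "integrable (joint_dist p W) (\<lambda>x. pmf (out_dist p W) (snd x) / pmf (W (fst x)) (snd x))"
    "(\<integral>x. pmf (out_dist p W) (snd x) / pmf (W (fst x)) (snd x) \<partial>joint_dist p W) \<le> 1"
    using nn_bound_integrable[OF _ le] by auto
qed

lemma info_dens_integrable:
  fixes W :: "'a \<Rightarrow> 'b pmf"
  assumes fin: "finite (set_pmf p)"
  shows "integrable (joint_dist p W) (\<lambda>(a,b). info_dens W p a b)"
proof -
  define C where "C = (\<Sum>a\<in>set_pmf p. \<bar>log 2 (pmf p a)\<bar>)"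
  let ?r = "\<lambda>x. pmf (out_dist p W) (snd x) / pmf (W (fst x)) (snd x)"
  have i1: "integrable (joint_dist p W) (\<lambda>x. C + ?r x / ln 2)"
    using ratio_integrable(1)[of p W]
    by (intro Bochner_Integration.integrable_add measure_pmf.integrable_const integrable_divide_zero)
  show ?thesis
  proof (rule Bochner_Integration.integrable_bound[OF i1])
    show "AE x in joint_dist p W. norm ((\<lambda>(a,b). info_dens W p a b) x) \<le> norm (C + ?r x / ln 2)"
    proof (unfold AE_measure_pmf_iff, intro ballI)
      fix x assume x: "x \<in> set_pmf (joint_dist p W)"
      obtain a b where xab: "x = (a,b)" by force
      have a: "a \<in> set_pmf p" and b: "b \<in> set_pmf (W a)" using x xab by (auto simp: set_joint)
      have up: "info_dens W p a b \<le> - log 2 (pmf p a)" by (rule info_dens_upper[where W=W, OF fin a b])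
      have lo: "- info_dens W p a b \<le> (?r x - 1) / ln 2"
        using info_dens_lower[where W=W, OF fin a b] xab by simp
      have Cge: "\<bar>log 2 (pmf p a)\<bar> \<le> C"
        unfolding C_def by (rule member_le_sum) (use a fin in auto)
      have r0: "0 \<le> ?r x" by simp
      have C0: "0 \<le> C" unfolding C_def by (simp add: sum_nonneg)
      have "(?r x - 1) / ln 2 \<le> ?r x / ln 2" by (rule divide_right_mono) auto
      hence "\<bar>info_dens W p a b\<bar> \<le> C + ?r x / ln 2"
        using up lo Cge r0 C0 by (smt (verit) divide_nonneg_pos ln_gt_zero)
      thus "norm ((\<lambda>(a,b). info_dens W p a b) x) \<le> norm (C + ?r x / ln 2)"
        using xab by simp
    qed
  qed simp
qed

lemma entropy_bound:
  fixes p :: "'a pmf"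
  assumes T: "finite T" "set_pmf p \<subseteq> T"
  shows "(\<Sum>a\<in>T. pmf p a * (- log 2 (pmf p a))) \<le> log 2 (card T)"
proof -
  have Tne: "T \<noteq> {}" using T set_pmf_not_empty[of p] by blast
  hence cT: "0 < real (card T)" using T by auto
  have "\<And>a. a \<in> T \<Longrightarrow> pmf p a * (- log 2 (pmf p a)) \<le> pmf p a * log 2 (card T) + (1 / card T - pmf p a) / ln 2"
  proof -
    fix a assume "a \<in> T"
    show "pmf p a * (- log 2 (pmf p a)) \<le> pmf p a * log 2 (card T) + (1 / card T - pmf p a) / ln 2"
    proof (cases "pmf p a = 0")
      case True thus ?thesis using cT by simp
    next
      case False
      hence pa: "0 < pmf p a" using pmf_nonneg[of p a] by linarith
      have "log 2 (1 / (pmf p a * card T)) \<le> (1 / (pmf p a * card T) - 1) / ln 2"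
        by (rule log_le_lin) (use pa cT in auto)
      moreover have "log 2 (1 / (pmf p a * card T)) = - log 2 (pmf p a) - log 2 (card T)"
        using pa cT by (simp add: log_divide log_mult)
      ultimately have "- log 2 (pmf p a) \<le> log 2 (card T) + (1 / (pmf p a * card T) - 1) / ln 2" by simp
      hence "pmf p a * (- log 2 (pmf p a)) \<le> pmf p a * (log 2 (card T) + (1 / (pmf p a * card T) - 1) / ln 2)"
        by (rule mult_left_mono) (use pa in simp)
      also have "\<dots> = pmf p a * log 2 (card T) + (1 / card T - pmf p a) / ln 2"
        using pa cT by (simp add: field_simps)
      finally show ?thesis .
    qed
  qed
  hence "(\<Sum>a\<in>T. pmf p a * (- log 2 (pmf p a))) \<le> (\<Sum>a\<in>T. pmf p a * log 2 (card T) + (1 / card T - pmf p a) / ln 2)"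
    by (rule sum_mono)
  also have "\<dots> = (\<Sum>a\<in>T. pmf p a) * log 2 (card T) + (card T * (1 / card T) - (\<Sum>a\<in>T. pmf p a)) / ln 2"
    by (simp add: sum.distrib sum_divide_distrib[symmetric] sum_distrib_right sum_subtractf)
  also have "\<dots> = log 2 (card T)" using sum_pmf_eq_1[OF T] cT by simp
  finally show ?thesis .
qed

lemma entropy_integral:
  fixes p :: "'a pmf"
  assumes T: "finite T" "set_pmf p \<subseteq> T"
  shows "(\<integral>a. - log 2 (pmf p a) \<partial>p) = (\<Sum>a\<in>T. pmf p a * (- log 2 (pmf p a)))"
  using T by (subst integral_measure_pmf_real[where A=T]) (auto simp: mult.commute)

lemma mutual_info_le:
  fixes W :: "'a \<Rightarrow> 'b pmf"
  assumes T: "finite T" "set_pmf p \<subseteq> T"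
  shows "mutual_info W p \<le> log 2 (card T)"
proof -
  have fin: "finite (set_pmf p)" using T finite_subset by auto
  have int2: "integrable (joint_dist p W) (\<lambda>x. - log 2 (pmf p (fst x)))"
  proof -
    have "integrable (map_pmf fst (joint_dist p W)) (\<lambda>a. - log 2 (pmf p a))"
      using fin by (simp add: map_fst_joint integrable_measure_pmf_finite)
    thus ?thesis by simp
  qed
  have "mutual_info W p \<le> (\<integral>x. - log 2 (pmf p (fst x)) \<partial>joint_dist p W)"
    unfolding mutual_info_def
  proof (rule integral_mono_AE[OF info_dens_integrable[OF fin] int2])
    show "AE x in joint_dist p W. (case x of (a, b) \<Rightarrow> info_dens W p a b) \<le> - log 2 (pmf p (fst x))"
      using info_dens_upper[OF fin] by (auto simp: AE_measure_pmf_iff set_joint)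
  qed
  also have "\<dots> = (\<integral>a. - log 2 (pmf p a) \<partial>map_pmf fst (joint_dist p W))" by simp
  also have "\<dots> = (\<integral>a. - log 2 (pmf p a) \<partial>p)" by (simp only: map_fst_joint)
  also have "\<dots> \<le> log 2 (card T)" using entropy_integral[OF T] entropy_bound[OF T] by simp
  finally show ?thesis .
qed



lemma pmf_map_ge: "pmf M y \<le> pmf (map_pmf f M) (f y)"
proof -
  have "pmf M y = measure M {y}" by (simp add: measure_pmf_single)
  also have "\<dots> \<le> measure M (f -` {f y})" by (rule measure_pmf.finite_measure_mono) auto
  finally show ?thesis by (simp add: pmf_map)
qed

definition Dd :: "('a \<Rightarrow> 'b pmf) \<Rightarrow> ('a \<Rightarrow> 'c pmf) \<Rightarrow> ('b \<Rightarrow> 'c) \<Rightarrow> 'a pmf \<Rightarrow> 'a \<times> 'b \<Rightarrow> real" where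
  "Dd W W' f p x = info_dens W p (fst x) (snd x) - info_dens W' p (fst x) (f (snd x))"

definition r2 :: "('a \<Rightarrow> 'b pmf) \<Rightarrow> ('a \<Rightarrow> 'c pmf) \<Rightarrow> ('b \<Rightarrow> 'c) \<Rightarrow> 'a pmf \<Rightarrow> 'a \<times> 'b \<Rightarrow> real" where
  "r2 W W' f p x = pmf (out_dist p W) (snd x) * pmf (W' (fst x)) (f (snd x)) /
      (pmf (W (fst x)) (snd x) * pmf (out_dist p W') (f (snd x)))"

definition phi :: "('a \<Rightarrow> 'b pmf) \<Rightarrow> ('a \<Rightarrow> 'c pmf) \<Rightarrow> ('b \<Rightarrow> 'c) \<Rightarrow> 'a pmf \<Rightarrow> 'b set \<Rightarrow> 'a \<times> 'b \<Rightarrow> real" where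
  "phi W W' f p A x = indicator A (snd x) * pmf (out_dist p W') (f (snd x)) / pmf (out_dist p W) (snd x)"

definition psi :: "('a \<Rightarrow> 'c pmf) \<Rightarrow> ('b \<Rightarrow> 'c) \<Rightarrow> 'a pmf \<Rightarrow> 'a \<times> 'b \<Rightarrow> real" where
  "psi W' f p x = pmf (out_dist p W') (f (snd x)) / pmf (W' (fst x)) (f (snd x))"

locale chpair0 =
  fixes W :: "'a \<Rightarrow> 'b::countable pmf" and W' :: "'a \<Rightarrow> 'c pmf" and f :: "'b \<Rightarrow> 'c"
    and p :: "'a pmf"
  assumes fin: "finite (set_pmf p)" and W'eq: "\<And>a. a \<in> set_pmf p \<Longrightarrow> W' a = map_pmf f (W a)"
begin

lemma joint_map: "joint_dist p W' = map_pmf (\<lambda>x. (fst x, f (snd x))) (joint_dist p W)"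
  unfolding joint_dist_def map_bind_pmf
  by (rule bind_pmf_cong) (auto simp: W'eq map_pmf_comp)

lemma out_map: "out_dist p W' = map_pmf f (out_dist p W)"
  unfolding out_dist_def map_bind_pmf
  by (rule bind_pmf_cong) (auto simp: W'eq)

lemma supp_facts:
  assumes x: "x \<in> set_pmf (joint_dist p W)"
  shows "fst x \<in> set_pmf p" "snd x \<in> set_pmf (W (fst x))"
    "0 < pmf (W (fst x)) (snd x)" "0 < pmf (out_dist p W) (snd x)"
    "pmf (W (fst x)) (snd x) \<le> pmf (W' (fst x)) (f (snd x))"
    "pmf (out_dist p W) (snd x) \<le> pmf (out_dist p W') (f (snd x))"
    "0 < pmf (W' (fst x)) (f (snd x))" "0 < pmf (out_dist p W') (f (snd x))"
    "f (snd x) \<in> set_pmf (W' (fst x))"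
proof -
  show a: "fst x \<in> set_pmf p" and b: "snd x \<in> set_pmf (W (fst x))" using x by (auto simp: set_joint)
  show w: "0 < pmf (W (fst x)) (snd x)" using b by (simp add: pmf_positive)
  show q: "0 < pmf (out_dist p W) (snd x)" by (rule out_pos[where W=W, OF fin a b])
  show w1: "pmf (W (fst x)) (snd x) \<le> pmf (W' (fst x)) (f (snd x))" using W'eq[OF a] pmf_map_ge by metis
  show q1: "pmf (out_dist p W) (snd x) \<le> pmf (out_dist p W') (f (snd x))" using out_map pmf_map_ge by metis
  show "0 < pmf (W' (fst x)) (f (snd x))" using w w1 by linarith
  thus "f (snd x) \<in> set_pmf (W' (fst x))" by (simp add: set_pmf_iff)
  show "0 < pmf (out_dist p W') (f (snd x))" using q q1 by linarith
qed

lemma Dd_eq: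
  assumes x: "x \<in> set_pmf (joint_dist p W)"
  shows "Dd W W' f p x = log 2 (pmf (W (fst x)) (snd x) / pmf (out_dist p W) (snd x))
          - log 2 (pmf (W' (fst x)) (f (snd x)) / pmf (out_dist p W') (f (snd x)))"
  using supp_facts[OF x] unfolding Dd_def
  by (simp add: info_dens_supp[where W=W, OF fin] info_dens_supp[where W=W', OF fin])

lemma minus_Dd_log_r2:
  assumes x: "x \<in> set_pmf (joint_dist p W)"
  shows "- Dd W W' f p x = log 2 (r2 W W' f p x)" "0 < r2 W W' f p x"
proof -
  note s = supp_facts[OF x]
  show "0 < r2 W W' f p x" using s by (simp add: r2_def)
  show "- Dd W W' f p x = log 2 (r2 W W' f p x)"
    using s unfolding Dd_eq[OF x] r2_def by (simp add: log_divide log_mult)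
qed

lemma Dd_le_log_phi:
  assumes x: "x \<in> set_pmf (joint_dist p W)" and A: "snd x \<in> A"
  shows "Dd W W' f p x \<le> log 2 (phi W W' f p A x)" "0 < phi W W' f p A x"
proof -
  note s = supp_facts[OF x]
  show "0 < phi W W' f p A x" using s A by (simp add: phi_def)
  have "Dd W W' f p x = log 2 (pmf (W (fst x)) (snd x)) - log 2 (pmf (W' (fst x)) (f (snd x)))
        + log 2 (phi W W' f p A x)"
    using s A unfolding Dd_eq[OF x] phi_def by (simp add: log_divide)
  moreover have "log 2 (pmf (W (fst x)) (snd x)) \<le> log 2 (pmf (W' (fst x)) (f (snd x)))"
    using s by simp
  ultimately show "Dd W W' f p x \<le> log 2 (phi W W' f p A x)" by linarith
qed

lemma r2_nn: "(\<integral>\<^sup>+x. ennreal (r2 W W' f p x) \<partial>joint_dist p W) \<le> 1"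
proof -
  let ?q = "out_dist p W" and ?q' = "out_dist p W'"
  let ?g = "\<lambda>a y. pmf ?q y * pmf (W' a) (f y) / pmf ?q' (f y)"
  have "(\<integral>\<^sup>+x. ennreal (r2 W W' f p x) \<partial>joint_dist p W)
      = (\<integral>\<^sup>+a. \<integral>\<^sup>+y. ennreal (?g a y / pmf (W a) y) \<partial>W a \<partial>p)"
    by (simp add: joint_dist_def r2_def field_simps)
  also have "\<dots> \<le> (\<integral>\<^sup>+a. \<integral>\<^sup>+y. ennreal (?g a y) \<partial>count_space UNIV \<partial>p)"
    by (rule nn_integral_mono, rule nn_ratio_le1) simp
  also have "\<dots> = (\<integral>\<^sup>+y. \<integral>\<^sup>+a. ennreal (?g a y) \<partial>p \<partial>count_space UNIV)"
    by (rule nn_integral_count_space_nn_integral) auto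
  also have "\<dots> = (\<integral>\<^sup>+y. ennreal (pmf ?q y / pmf ?q' (f y)) * (\<integral>\<^sup>+a. ennreal (pmf (W' a) (f y)) \<partial>p) \<partial>count_space UNIV)"
    by (rule nn_integral_cong, subst nn_integral_cmult[symmetric])
       (auto simp: ennreal_mult[symmetric] intro!: nn_integral_cong)
  also have "\<dots> = (\<integral>\<^sup>+y. ennreal (pmf ?q y / pmf ?q' (f y)) * ennreal (pmf ?q' (f y)) \<partial>count_space UNIV)"
    by (simp add: out_dist_def ennreal_pmf_bind)
  also have "\<dots> \<le> (\<integral>\<^sup>+y. ennreal (pmf ?q y) \<partial>count_space UNIV)"
  proof (rule nn_integral_mono)
    fix y
    have "pmf ?q y / pmf ?q' (f y) * pmf ?q' (f y) \<le> pmf ?q y"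
      by (cases "pmf ?q' (f y) = 0") auto
    thus "ennreal (pmf ?q y / pmf ?q' (f y)) * ennreal (pmf ?q' (f y)) \<le> ennreal (pmf ?q y)"
      by (simp add: ennreal_mult[symmetric])
  qed
  also have "\<dots> = 1" by (rule pmf_total)
  finally show ?thesis .
qed

lemma r2_int: "integrable (joint_dist p W) (r2 W W' f p)" "integral\<^sup>L (joint_dist p W) (r2 W W' f p) \<le> 1"
proof -
  have le: "(\<integral>\<^sup>+x. ennreal (r2 W W' f p x) \<partial>joint_dist p W) \<le> ennreal 1" using r2_nn by simp
  have nn: "\<And>x. x \<in> set_pmf (joint_dist p W) \<Longrightarrow> 0 \<le> r2 W W' f p x"
    using minus_Dd_log_r2(2) less_imp_le by blast
  show "integrable (joint_dist p W) (r2 W W' f p)" "integral\<^sup>L (joint_dist p W) (r2 W W' f p) \<le> 1"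
    using nn_bound_integrable[OF nn le] by auto
qed

end



locale chpair = chpair0 W W' f p
  for W :: "'a \<Rightarrow> 'b::countable pmf" and W' :: "'a \<Rightarrow> 'c pmf" and f :: "'b \<Rightarrow> 'c"
    and p :: "'a pmf" +
  fixes A :: "'b set" and bb :: real
  assumes injA: "inj_on f A"
    and beta: "\<And>a. a \<in> set_pmf p \<Longrightarrow> measure_pmf.prob (W a) (- A) \<le> bb"
begin

lemma phi_nn: "(\<integral>\<^sup>+x. ennreal (phi W W' f p A x) \<partial>joint_dist p W) \<le> 1"
proof -
  let ?q = "out_dist p W" and ?q' = "out_dist p W'"
  let ?h = "\<lambda>y. ennreal (indicator A y * pmf ?q' (f y) / pmf ?q y)"
  have "(\<integral>\<^sup>+x. ennreal (phi W W' f p A x) \<partial>joint_dist p W) = (\<integral>\<^sup>+x. ?h (snd x) \<partial>joint_dist p W)"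
    by (simp add: phi_def)
  also have "\<dots> = (\<integral>\<^sup>+y. ?h y \<partial>map_pmf snd (joint_dist p W))" by simp
  also have "\<dots> = (\<integral>\<^sup>+y. ?h y \<partial>?q)" by (simp only: map_snd_joint)
  also have "\<dots> = (\<integral>\<^sup>+y. ennreal (pmf ?q y) * ?h y \<partial>count_space UNIV)" by (rule nn_integral_measure_pmf)
  also have "\<dots> \<le> (\<integral>\<^sup>+y. ennreal (pmf ?q' (f y)) * indicator A y \<partial>count_space UNIV)"
  proof (rule nn_integral_mono)
    fix y
    have "pmf ?q y * (indicator A y * pmf ?q' (f y) / pmf ?q y) \<le> pmf ?q' (f y) * indicator A y"
      by (cases "pmf ?q y = 0"; cases "y \<in> A") auto
    thus "ennreal (pmf ?q y) * ?h y \<le> ennreal (pmf ?q' (f y)) * indicator A y"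
      by (simp add: ennreal_mult[symmetric] ennreal_indicator[symmetric] del: ennreal_indicator)
  qed
  also have "\<dots> = (\<integral>\<^sup>+y. ennreal (pmf ?q' (f y)) \<partial>count_space A)"
    by (simp add: nn_integral_count_space_indicator)
  also have "\<dots> = emeasure ?q' (f ` A)" by (rule nn_integral_pmf'[OF injA])
  also have "\<dots> \<le> 1" by (simp add: measure_pmf.emeasure_le_1)
  finally show ?thesis .
qed

lemma phi_int: "integrable (joint_dist p W) (phi W W' f p A)" "integral\<^sup>L (joint_dist p W) (phi W W' f p A) \<le> 1"
proof -
  have le: "(\<integral>\<^sup>+x. ennreal (phi W W' f p A x) \<partial>joint_dist p W) \<le> ennreal 1" using phi_nn by simp
  have nn: "\<And>x. x \<in> set_pmf (joint_dist p W) \<Longrightarrow> 0 \<le> phi W W' f p A x"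
    by (simp add: phi_def)
  show "integrable (joint_dist p W) (phi W W' f p A)" "integral\<^sup>L (joint_dist p W) (phi W W' f p A) \<le> 1"
    using nn_bound_integrable[OF nn le] by auto
qed

lemma psi_int: "integrable (joint_dist p W) (psi W' f p)" "integral\<^sup>L (joint_dist p W) (psi W' f p) \<le> 1"
proof -
  have i: "integrable (map_pmf (\<lambda>x. (fst x, f (snd x))) (joint_dist p W)) (\<lambda>z. pmf (out_dist p W') (snd z) / pmf (W' (fst z)) (snd z))"
    using ratio_integrable(1)[of p W'] joint_map by simp
  have j: "integral\<^sup>L (map_pmf (\<lambda>x. (fst x, f (snd x))) (joint_dist p W)) (\<lambda>z. pmf (out_dist p W') (snd z) / pmf (W' (fst z)) (snd z)) \<le> 1"
    using ratio_integrable(2)[of p W'] joint_map by simp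
  show "integrable (joint_dist p W) (psi W' f p)"
    using i unfolding psi_def[abs_def] by simp
  show "integral\<^sup>L (joint_dist p W) (psi W' f p) \<le> 1"
    using j unfolding psi_def[abs_def] by simp
qed

lemma bb_nonneg: "0 \<le> bb"
proof -
  obtain a where "a \<in> set_pmf p" using set_pmf_not_empty by fastforce
  from beta[OF this] show ?thesis by (meson measure_nonneg order_trans)
qed

lemma probB: "measure_pmf.prob (joint_dist p W) {x. snd x \<notin> A} \<le> bb"
proof -
  have "measure_pmf.prob (joint_dist p W) {x. snd x \<notin> A} = measure_pmf.prob (map_pmf snd (joint_dist p W)) (-A)"
    by (simp add: vimage_def Collect_neg_eq[symmetric])
  also have "\<dots> = measure_pmf.prob (out_dist p W) (-A)" by (simp only: map_snd_joint)
  finally have e: "measure_pmf.prob (joint_dist p W) {x. snd x \<notin> A} = measure_pmf.prob (out_dist p W) (-A)" .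
  have "emeasure (out_dist p W) (-A) = (\<integral>\<^sup>+a. emeasure (W a) (-A) \<partial>p)"
    by (simp add: out_dist_def)
  also have "\<dots> \<le> (\<integral>\<^sup>+a. ennreal bb \<partial>p)"
    by (rule nn_integral_mono_AE)
       (use beta in \<open>auto simp: AE_measure_pmf_iff measure_pmf.emeasure_eq_measure intro!: ennreal_leI\<close>)
  also have "\<dots> = ennreal bb" by (simp add: measure_pmf.emeasure_space_1)
  finally have "ennreal (measure_pmf.prob (out_dist p W) (-A)) \<le> ennreal bb"
    by (simp add: measure_pmf.emeasure_eq_measure)
  thus ?thesis using e bb_nonneg by (simp add: ennreal_le_iff)
qed

definition hB where "hB x = indicator (- A) (snd x) * (- log 2 (pmf p (fst x)))"

lemma hB_int:
  assumes T: "finite T" "set_pmf p \<subseteq> T"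
  shows "integrable (joint_dist p W) hB" "integral\<^sup>L (joint_dist p W) hB \<le> bb * log 2 (card T)"
proof -
  have Tne: "T \<noteq> {}" using T set_pmf_not_empty[of p] by blast
  hence cT: "1 \<le> card T" using T by (simp add: Suc_leI card_gt_0_iff)
  have lT: "0 \<le> log 2 (card T)" using cT by simp
  have cpos: "\<And>a. a \<in> set_pmf p \<Longrightarrow> 0 \<le> - log 2 (pmf p a)"
    using pmf_le_1 by (simp add: pmf_positive)
  have nn: "\<And>x. x \<in> set_pmf (joint_dist p W) \<Longrightarrow> 0 \<le> hB x"
    using cpos by (auto simp: hB_def set_joint intro!: mult_nonneg_nonpos)
  have "(\<integral>\<^sup>+x. ennreal (hB x) \<partial>joint_dist p W)
        = (\<integral>\<^sup>+a. \<integral>\<^sup>+y. ennreal (indicator (- A) y * (- log 2 (pmf p a))) \<partial>W a \<partial>p)"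
    by (simp add: joint_dist_def hB_def)
  also have "\<dots> = (\<integral>\<^sup>+a. ennreal (- log 2 (pmf p a)) * emeasure (W a) (- A) \<partial>p)"
  proof (rule nn_integral_cong_AE)
    show "AE a in p. (\<integral>\<^sup>+y. ennreal (indicator (- A) y * (- log 2 (pmf p a))) \<partial>W a)
        = ennreal (- log 2 (pmf p a)) * emeasure (W a) (- A)"
    proof (unfold AE_measure_pmf_iff, intro ballI)
      fix a assume a: "a \<in> set_pmf p"
      have "(\<integral>\<^sup>+y. ennreal (indicator (- A) y * (- log 2 (pmf p a))) \<partial>W a)
          = (\<integral>\<^sup>+y. ennreal (- log 2 (pmf p a)) * indicator (- A) y \<partial>W a)"
        by (rule nn_integral_cong) (auto simp: indicator_def)
      also have "\<dots> = ennreal (- log 2 (pmf p a)) * emeasure (W a) (- A)"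
        by (rule nn_integral_cmult_indicator) simp
      finally show "(\<integral>\<^sup>+y. ennreal (indicator (- A) y * (- log 2 (pmf p a))) \<partial>W a)
        = ennreal (- log 2 (pmf p a)) * emeasure (W a) (- A)" .
    qed
  qed
  also have "\<dots> \<le> (\<integral>\<^sup>+a. ennreal (bb * (- log 2 (pmf p a))) \<partial>p)"
  proof (rule nn_integral_mono_AE, unfold AE_measure_pmf_iff, intro ballI)
    fix a assume a: "a \<in> set_pmf p"
    have "ennreal (- log 2 (pmf p a)) * emeasure (W a) (- A) = ennreal (- log 2 (pmf p a) * measure_pmf.prob (W a) (- A))"
      using cpos[OF a] by (simp add: measure_pmf.emeasure_eq_measure ennreal_mult'[symmetric])
    also have "\<dots> \<le> ennreal (bb * (- log 2 (pmf p a)))"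
      using beta[OF a] cpos[OF a] by (intro ennreal_leI) (simp add: mult.commute mult_right_mono_neg)
    finally show "ennreal (- log 2 (pmf p a)) * emeasure (W a) (- A) \<le> ennreal (bb * (- log 2 (pmf p a)))" .
  qed
  also have "\<dots> = ennreal (\<integral>a. bb * (- log 2 (pmf p a)) \<partial>p)"
    by (rule nn_integral_eq_integral)
       (use fin bb_nonneg cpos in \<open>auto simp: integrable_measure_pmf_finite AE_measure_pmf_iff intro!: mult_nonneg_nonpos\<close>)
  also have "(\<integral>a. bb * (- log 2 (pmf p a)) \<partial>p) = bb * (\<integral>a. - log 2 (pmf p a) \<partial>p)" by simp
  also have "\<dots> \<le> bb * log 2 (card T)"
    using entropy_integral[OF T] entropy_bound[OF T] bb_nonneg by (simp add: mult_left_mono)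
  finally have le: "(\<integral>\<^sup>+x. ennreal (hB x) \<partial>joint_dist p W) \<le> ennreal (bb * log 2 (card T))"
    by (simp add: ennreal_leI)
  show "integrable (joint_dist p W) hB" "integral\<^sup>L (joint_dist p W) hB \<le> bb * log 2 (card T)"
    using nn_bound_integrable[OF nn le] bb_nonneg lT by auto
qed

end



context chpair
begin

lemma iV_int: "integrable (joint_dist p W) (\<lambda>x. info_dens W' p (fst x) (f (snd x)))"
  using info_dens_integrable[OF fin, of W'] joint_map by (simp add: case_prod_beta)

lemma cp_eq: "(\<lambda>(a,b). g a b) = (\<lambda>x. g (fst x) (snd x))"
  by (rule ext) (simp add: split_beta)

lemma iU_int: "integrable (joint_dist p W) (\<lambda>x. info_dens W p (fst x) (snd x))"
  using info_dens_integrable[OF fin, of W] by (simp only: cp_eq)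

lemma Dd_int: "integrable (joint_dist p W) (Dd W W' f p)"
  unfolding Dd_def[abs_def] using iU_int iV_int by simp

lemma mi_diff: "mutual_info W p - mutual_info W' p = integral\<^sup>L (joint_dist p W) (Dd W W' f p)"
proof -
  have "mutual_info W' p = (\<integral>x. info_dens W' p (fst x) (f (snd x)) \<partial>joint_dist p W)"
    unfolding mutual_info_def joint_map by (simp add: case_prod_beta)
  moreover have "mutual_info W p = (\<integral>x. info_dens W p (fst x) (snd x) \<partial>joint_dist p W)"
    unfolding mutual_info_def by (simp only: cp_eq)
  ultimately show ?thesis
    unfolding Dd_def[abs_def] using iU_int iV_int by simp
qed

lemma M1: "mutual_info W' p \<le> mutual_info W p"
proof -
  have "(\<integral>x. - Dd W W' f p x \<partial>joint_dist p W) \<le> (\<integral>x. (r2 W W' f p x - 1) / ln 2 \<partial>joint_dist p W)"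
  proof (rule integral_mono_AE)
    show "integrable (joint_dist p W) (\<lambda>x. - Dd W W' f p x)" using Dd_int by simp
    show "integrable (joint_dist p W) (\<lambda>x. (r2 W W' f p x - 1) / ln 2)"
      using r2_int(1) by (intro integrable_divide_zero Bochner_Integration.integrable_diff measure_pmf.integrable_const)
    show "AE x in joint_dist p W. - Dd W W' f p x \<le> (r2 W W' f p x - 1) / ln 2"
      unfolding AE_measure_pmf_iff using minus_Dd_log_r2 log_le_lin by metis
  qed
  also have "\<dots> = (integral\<^sup>L (joint_dist p W) (r2 W W' f p) - 1) / ln 2"
    using r2_int(1) by (simp add: Bochner_Integration.integral_diff)
  also have "\<dots> \<le> 0" using r2_int(2) by (simp add: divide_nonpos_pos)
  finally have "integral\<^sup>L (joint_dist p W) (Dd W W' f p) \<ge> 0" by simp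
  thus ?thesis using mi_diff by simp
qed

lemma M2:
  assumes T: "finite T" "set_pmf p \<subseteq> T"
  shows "mutual_info W p \<le> mutual_info W' p + 2 / ln 2 + bb * log 2 (card T)"
proof -
  let ?J = "joint_dist p W"
  have "integral\<^sup>L ?J (Dd W W' f p) \<le> (\<integral>x. phi W W' f p A x / ln 2 + hB x + psi W' f p x / ln 2 \<partial>?J)"
  proof (rule integral_mono_AE)
    show "integrable ?J (Dd W W' f p)" by (rule Dd_int)
    show "integrable ?J (\<lambda>x. phi W W' f p A x / ln 2 + hB x + psi W' f p x / ln 2)"
      using phi_int(1) hB_int(1)[OF T] psi_int(1)
      by (intro integrable_divide_zero Bochner_Integration.integrable_add)
    show "AE x in ?J. Dd W W' f p x \<le> phi W W' f p A x / ln 2 + hB x + psi W' f p x / ln 2"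
    proof (unfold AE_measure_pmf_iff, intro ballI)
      fix x assume x: "x \<in> set_pmf ?J"
      note s = supp_facts[OF x]
      have psi0: "0 \<le> psi W' f p x" by (simp add: psi_def)
      show "Dd W W' f p x \<le> phi W W' f p A x / ln 2 + hB x + psi W' f p x / ln 2"
      proof (cases "snd x \<in> A")
        case True
        have "Dd W W' f p x \<le> log 2 (phi W W' f p A x)" by (rule Dd_le_log_phi(1)[OF x True])
        also have "\<dots> \<le> (phi W W' f p A x - 1) / ln 2" by (rule log_le_lin[OF Dd_le_log_phi(2)[OF x True]])
        also have "\<dots> \<le> phi W W' f p A x / ln 2" by (rule divide_right_mono) auto
        moreover have "0 \<le> psi W' f p x / ln 2" using psi0 by simp
        ultimately show ?thesis using True by (simp add: hB_def)
      next
        case False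
        have u: "info_dens W p (fst x) (snd x) \<le> - log 2 (pmf p (fst x))"
          by (rule info_dens_upper[where W=W, OF fin s(1) s(2)])
        have l: "- info_dens W' p (fst x) (f (snd x)) \<le> (psi W' f p x - 1) / ln 2"
          using info_dens_lower[where W=W', OF fin s(1) s(9)] by (simp add: psi_def)
        have "(psi W' f p x - 1) / ln 2 \<le> psi W' f p x / ln 2" by (rule divide_right_mono) auto
        thus ?thesis using u l False by (simp add: Dd_def hB_def phi_def)
      qed
    qed
  qed
  also have "\<dots> = integral\<^sup>L ?J (phi W W' f p A) / ln 2 + integral\<^sup>L ?J hB + integral\<^sup>L ?J (psi W' f p) / ln 2"
    using phi_int(1) hB_int(1)[OF T] psi_int(1)
    by (simp add: Bochner_Integration.integral_add integrable_divide_zero)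
  also have "\<dots> \<le> 1 / ln 2 + bb * log 2 (card T) + 1 / ln 2"
    using phi_int(2) hB_int(2)[OF T] psi_int(2)
    by (intro add_mono divide_right_mono) auto
  finally show ?thesis using mi_diff by simp
qed

lemma M3:
  assumes c: "0 < c"
  shows "measure_pmf.prob (joint_dist p W) {x. c \<le> \<bar>Dd W W' f p x\<bar>} \<le> bb + 2 / 2 powr c"
proof -
  let ?J = "joint_dist p W"
  let ?S = "{x. c \<le> \<bar>Dd W W' f p x\<bar>}"
  let ?B = "{x. snd x \<notin> A}" and ?P = "{x. 2 powr c \<le> phi W W' f p A x}" and ?R = "{x. 2 powr c \<le> r2 W W' f p x}"
  have sub: "?S \<inter> set_pmf ?J \<subseteq> ?B \<union> ?P \<union> ?R"
  proof
    fix x assume "x \<in> ?S \<inter> set_pmf ?J"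
    hence xS: "c \<le> \<bar>Dd W W' f p x\<bar>" and x: "x \<in> set_pmf ?J" by auto
    show "x \<in> ?B \<union> ?P \<union> ?R"
    proof (cases "c \<le> Dd W W' f p x")
      case True
      show ?thesis
      proof (cases "snd x \<in> A")
        case A: True
        have "c \<le> log 2 (phi W W' f p A x)" using True Dd_le_log_phi(1)[OF x A] by linarith
        hence "2 powr c \<le> phi W W' f p A x" using Dd_le_log_phi(2)[OF x A] by (simp add: le_log_iff)
        thus ?thesis by simp
      qed simp
    next
      case False
      hence "c \<le> - Dd W W' f p x" using xS by linarith
      hence "c \<le> log 2 (r2 W W' f p x)" using minus_Dd_log_r2(1)[OF x] by simp
      hence "2 powr c \<le> r2 W W' f p x" using minus_Dd_log_r2(2)[OF x] by (simp add: le_log_iff)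
      thus ?thesis by simp
    qed
  qed
  have "measure_pmf.prob ?J ?S = measure_pmf.prob ?J (?S \<inter> set_pmf ?J)" by (simp add: measure_Int_set_pmf)
  also have "\<dots> \<le> measure_pmf.prob ?J (?B \<union> ?P \<union> ?R)" by (rule measure_pmf.finite_measure_mono[OF sub]) simp
  also have "\<dots> \<le> measure_pmf.prob ?J ?B + measure_pmf.prob ?J ?P + measure_pmf.prob ?J ?R"
  proof -
    have su: "\<And>X Y. measure_pmf.prob ?J (X \<union> Y) \<le> measure_pmf.prob ?J X + measure_pmf.prob ?J Y"
      by (rule measure_subadditive) (auto simp: measure_pmf.emeasure_finite)
    show ?thesis using su[of "?B \<union> ?P" ?R] su[of ?B ?P] by linarith
  qed
  also have "\<dots> \<le> bb + 1 / 2 powr c + 1 / 2 powr c"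
  proof (intro add_mono)
    show "measure_pmf.prob ?J ?B \<le> bb" by (rule probB)
    have "measure_pmf.prob ?J ?P \<le> integral\<^sup>L ?J (phi W W' f p A) / 2 powr c"
    proof -
      have nn: "AE x in ?J. 0 \<le> phi W W' f p A x" by (simp add: AE_measure_pmf_iff phi_def)
      show ?thesis using integral_Markov_inequality_measure[OF phi_int(1) _ nn, of UNIV "2 powr c"] by simp
    qed
    thus "measure_pmf.prob ?J ?P \<le> 1 / 2 powr c" using phi_int(2) by (smt (verit) divide_right_mono powr_gt_zero)
    have "measure_pmf.prob ?J ?R \<le> integral\<^sup>L ?J (r2 W W' f p) / 2 powr c"
      using integral_Markov_inequality_measure[OF r2_int(1), of UNIV "2 powr c"] minus_Dd_log_r2(2)
      by (simp add: AE_measure_pmf_iff less_imp_le)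
    thus "measure_pmf.prob ?J ?R \<le> 1 / 2 powr c" using r2_int(2) by (smt (verit) divide_right_mono powr_gt_zero)
  qed
  finally show ?thesis by simp
qed

end



lemma abstract_transfer:
  fixes M :: "nat \<Rightarrow> 'a pmf" and F G :: "nat \<Rightarrow> 'a \<Rightarrow> real"
  assumes FG: "\<And>\<epsilon>. \<epsilon> > 0 \<Longrightarrow> (\<lambda>n. measure_pmf.prob (M n) {x. \<epsilon> \<le> \<bar>F n x - G n x\<bar>}) \<longlonglongrightarrow> 0"
    and F: "\<And>\<delta>. \<delta> > 0 \<Longrightarrow> (\<lambda>n. measure_pmf.prob (M n) {x. \<bar>F n x - I\<bar> > \<delta>}) \<longlonglongrightarrow> 0"
    and d: "\<delta> > 0"
  shows "(\<lambda>n. measure_pmf.prob (M n) {x. \<bar>G n x - I\<bar> > \<delta>}) \<longlonglongrightarrow> 0"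
proof (rule tendsto_sandwich[where f="\<lambda>n. 0"])
  show "\<forall>\<^sub>F n in sequentially. 0 \<le> measure_pmf.prob (M n) {x. \<bar>G n x - I\<bar> > \<delta>}" by simp
  show "(\<lambda>n. 0::real) \<longlonglongrightarrow> 0" by simp
  let ?u = "\<lambda>n. measure_pmf.prob (M n) {x. \<bar>F n x - I\<bar> > \<delta>/2} + measure_pmf.prob (M n) {x. \<delta>/2 \<le> \<bar>F n x - G n x\<bar>}"
  show "\<forall>\<^sub>F n in sequentially. measure_pmf.prob (M n) {x. \<bar>G n x - I\<bar> > \<delta>} \<le> ?u n"
  proof (intro always_eventually allI)
    fix n
    have "measure_pmf.prob (M n) {x. \<bar>G n x - I\<bar> > \<delta>}
       \<le> measure_pmf.prob (M n) ({x. \<bar>F n x - I\<bar> > \<delta>/2} \<union> {x. \<delta>/2 \<le> \<bar>F n x - G n x\<bar>})"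
    proof (rule measure_pmf.finite_measure_mono)
      show "{x. \<bar>G n x - I\<bar> > \<delta>} \<subseteq> {x. \<bar>F n x - I\<bar> > \<delta>/2} \<union> {x. \<delta>/2 \<le> \<bar>F n x - G n x\<bar>}"
      proof
        fix x assume "x \<in> {x. \<bar>G n x - I\<bar> > \<delta>}"
        hence "\<bar>G n x - I\<bar> > \<delta>" by simp
        thus "x \<in> {x. \<bar>F n x - I\<bar> > \<delta>/2} \<union> {x. \<delta>/2 \<le> \<bar>F n x - G n x\<bar>}"
          by (cases "\<delta>/2 \<le> \<bar>F n x - G n x\<bar>") (simp_all, smt (verit))
      qed
    qed simp
    also have "\<dots> \<le> ?u n"
      by (rule measure_subadditive) (auto simp: measure_pmf.emeasure_finite)
    finally show "measure_pmf.prob (M n) {x. \<bar>G n x - I\<bar> > \<delta>} \<le> ?u n" .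
  qed
  show "?u \<longlonglongrightarrow> 0"
  proof -
    have d2: "\<delta>/2 > 0" using d by simp
    show ?thesis using tendsto_add[OF F[OF d2] FG[OF d2]] by simp
  qed
qed

lemma Sup_cmp:
  fixes g h :: "'p \<Rightarrow> real"
  assumes ne: "P \<noteq> {}" and le1: "\<And>p. p \<in> P \<Longrightarrow> g p \<le> h p" and le2: "\<And>p. p \<in> P \<Longrightarrow> h p \<le> g p + c"
    and bdd: "\<And>p. p \<in> P \<Longrightarrow> h p \<le> K"
  shows "Sup (g ` P) \<le> Sup (h ` P)" "Sup (h ` P) \<le> Sup (g ` P) + c"
proof -
  have bh: "bdd_above (h ` P)" using bdd by (meson bdd_aboveI2)
  have gK: "\<And>p. p \<in> P \<Longrightarrow> g p \<le> K" using bdd le1 by (meson order_trans)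
  have bg: "bdd_above (g ` P)" using gK by (meson bdd_aboveI2)
  show "Sup (g ` P) \<le> Sup (h ` P)"
    by (rule cSUP_mono[OF ne bh]) (use le1 in auto)
  show "Sup (h ` P) \<le> Sup (g ` P) + c"
  proof (rule cSUP_least[OF ne])
    fix p assume p: "p \<in> P"
    have "g p \<le> Sup (g ` P)" by (rule cSUP_upper[OF p bg])
    thus "h p \<le> Sup (g ` P) + c" using le2[OF p] by linarith
  qed
qed

lemma finite_inputs: "finite (inputs n :: 'x::finite list set)"
  unfolding inputs_def using finite_lists_length_eq[of "UNIV::'x set" n] by simp

lemma card_inputs: "card (inputs n :: 'x::finite list set) = CARD('x) ^ n"
  unfolding inputs_def using card_lists_length_eq[of "UNIV::'x set" n] by simp

lemma inputs_ne: "inputs n \<noteq> {}"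
  unfolding inputs_def by (metis (mono_tags) empty_iff length_replicate mem_Collect_eq)

lemma chan_info_img: "chan_info W n = Sup ((\<lambda>p. mutual_info W p) ` {p. set_pmf p \<subseteq> inputs n})"
  unfolding chan_info_def by (rule arg_cong[where f=Sup]) auto



lemma cs_mono: "coding_scheme W S M e \<Longrightarrow> e \<le> e' \<Longrightarrow> coding_scheme W S M e'"
  unfolding coding_scheme_def by (meson order_trans)

lemma pow_lim: "0 < (\<epsilon>::real) \<Longrightarrow> (\<lambda>n. 2 / 2 powr (\<epsilon> * real n)) \<longlonglongrightarrow> 0"
proof -
  assume e: "0 < \<epsilon>"
  have gt: "1 < 2 powr \<epsilon>" using e by simp
  have eq: "2 / 2 powr (\<epsilon> * real n) = 2 * inverse ((2 powr \<epsilon>) ^ n)" for n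
    by (simp add: powr_powr[symmetric] powr_realpow divide_inverse)
  show ?thesis unfolding eq
    using tendsto_mult_right_zero[OF LIMSEQ_inverse_realpow_zero[OF gt], of 2] by simp
qed

theorem proposition7:
  fixes U :: "nat \<Rightarrow> 'x::finite list \<Rightarrow> 'y::countable pmf"
    and V :: "nat \<Rightarrow> 'x list \<Rightarrow> 'z::countable pmf"
    and f :: "nat \<Rightarrow> 'y \<Rightarrow> 'z"
    and A B :: "nat \<Rightarrow> 'y set"
    and A' B' :: "nat \<Rightarrow> 'z set"
  assumes V_def: "\<And>n x. x \<in> inputs n \<Longrightarrow> V n x = map_pmf (f n) (U n x)"
    and Y_part: "\<And>n. A n \<inter> B n = {} \<and> A n \<union> B n = UNIV"
    and Z_part: "\<And>n. A' n \<inter> B' n = {} \<and> A' n \<union> B' n = UNIV"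
    and f_bij: "\<And>n. bij_betw (f n) (A n) (A' n)"
    and beta_lim: "(\<lambda>n. Max ((\<lambda>x. measure_pmf.prob (U n x) (B n)) ` inputs n)) \<longlonglongrightarrow> 0"
  shows "capacity U = capacity V \<and>
         ((info_rate_exists U \<or> info_rate_exists V) \<longrightarrow>
            info_rate_exists U \<and> info_rate_exists V \<and> info_rate U = info_rate V) \<and>
         (strictly_info_stable U \<longleftrightarrow> strictly_info_stable V)"
proof -
  define Bb where "Bb n = Max ((\<lambda>x. measure_pmf.prob (U n x) (B n)) ` inputs n)" for n
  have BA: "B n = - A n" for n using Y_part[of n] by auto
  have injA: "inj_on (f n) (A n)" for n using f_bij[of n] bij_betw_def by blast
  have beta: "measure_pmf.prob (U n x) (- A n) \<le> Bb n" if "x \<in> inputs n" for n x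
    unfolding Bb_def BA[symmetric] by (rule Max_ge) (use that finite_inputs in auto)
  have Bb_lim: "Bb \<longlonglongrightarrow> 0" using beta_lim unfolding Bb_def[abs_def] .
  have cp: "chpair (U n) (V n) (f n) p (A n) (Bb n)" if p: "set_pmf p \<subseteq> inputs n" for n p
  proof -
    have "finite (set_pmf p)" using p finite_inputs finite_subset by blast
    thus ?thesis unfolding chpair_def chpair0_def chpair_axioms_def
      using p V_def injA beta by auto
  qed

  have cs1: "coding_scheme (U n) (inputs n) M e" if "coding_scheme (V n) (inputs n) M e" for n M e
  proof -
    from that obtain x :: "nat \<Rightarrow> 'x list" and R :: "nat \<Rightarrow> 'z set" where
      x: "inj_on x {..<M}" "x ` {..<M} \<subseteq> inputs n" and R: "disjoint_family_on R {..<M}"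
      and err: "\<forall>i<M. measure_pmf.prob (V n (x i)) (- R i) \<le> e"
      unfolding coding_scheme_def by blast
    show ?thesis unfolding coding_scheme_def
    proof (intro exI conjI)
      show "inj_on x {..<M}" "x ` {..<M} \<subseteq> inputs n" by (fact x)+
      show "disjoint_family_on (\<lambda>i. f n -` R i) {..<M}"
        using R by (auto simp: disjoint_family_on_def)
      show "\<forall>i<M. measure_pmf.prob (U n (x i)) (- (f n -` R i)) \<le> e"
      proof (intro allI impI)
        fix i assume i: "i < M"
        have xi: "x i \<in> inputs n" using x i by auto
        have "measure_pmf.prob (U n (x i)) (- (f n -` R i)) = measure_pmf.prob (V n (x i)) (- R i)"
          by (simp add: V_def[OF xi] vimage_Compl)
        thus "measure_pmf.prob (U n (x i)) (- (f n -` R i)) \<le> e" using err i by simp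
      qed
    qed
  qed
  have cs2: "coding_scheme (V n) (inputs n) M (e + Bb n)" if "coding_scheme (U n) (inputs n) M e" for n M e
  proof -
    from that obtain x :: "nat \<Rightarrow> 'x list" and R :: "nat \<Rightarrow> 'y set" where
      x: "inj_on x {..<M}" "x ` {..<M} \<subseteq> inputs n" and R: "disjoint_family_on R {..<M}"
      and err: "\<forall>i<M. measure_pmf.prob (U n (x i)) (- R i) \<le> e"
      unfolding coding_scheme_def by blast
    show ?thesis unfolding coding_scheme_def
    proof (intro exI conjI)
      show "inj_on x {..<M}" "x ` {..<M} \<subseteq> inputs n" by (fact x)+
      show "disjoint_family_on (\<lambda>i. f n ` (R i \<inter> A n)) {..<M}"
        unfolding disjoint_family_on_def
      proof (intro ballI impI)
        fix i j assume ij: "i \<in> {..<M}" "j \<in> {..<M}" "i \<noteq> j"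
        show "f n ` (R i \<inter> A n) \<inter> f n ` (R j \<inter> A n) = {}"
        proof (rule ccontr)
          assume "f n ` (R i \<inter> A n) \<inter> f n ` (R j \<inter> A n) \<noteq> {}"
          then obtain y1 y2 where y: "y1 \<in> R i" "y1 \<in> A n" "y2 \<in> R j" "y2 \<in> A n" "f n y1 = f n y2" by blast
          hence "y1 = y2" using injA[of n] by (meson inj_onD)
          thus False using y R ij unfolding disjoint_family_on_def by blast
        qed
      qed
      show "\<forall>i<M. measure_pmf.prob (V n (x i)) (- (f n ` (R i \<inter> A n))) \<le> e + Bb n"
      proof (intro allI impI)
        fix i assume i: "i < M"
        have xi: "x i \<in> inputs n" using x i by auto
        have "measure_pmf.prob (V n (x i)) (- (f n ` (R i \<inter> A n)))
            = measure_pmf.prob (U n (x i)) (f n -` (- (f n ` (R i \<inter> A n))))"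
          by (simp add: V_def[OF xi])
        also have "\<dots> \<le> measure_pmf.prob (U n (x i)) (- R i \<union> - A n)"
          by (rule measure_pmf.finite_measure_mono) auto
        also have "\<dots> \<le> measure_pmf.prob (U n (x i)) (- R i) + measure_pmf.prob (U n (x i)) (- A n)"
          by (rule measure_subadditive) (auto simp: measure_pmf.emeasure_finite)
        also have "\<dots> \<le> e + Bb n" using err i beta[OF xi] by (simp add: add_mono)
        finally show "measure_pmf.prob (V n (x i)) (- (f n ` (R i \<inter> A n))) \<le> e + Bb n" .
      qed
    qed
  qed
  have ach: "achievable U R \<longleftrightarrow> achievable V R" for R
  proof
    assume "achievable V R" thus "achievable U R" unfolding achievable_def using cs1 by meson
  next
    assume aU: "achievable U R"
    show "achievable V R" unfolding achievable_def
    proof (intro conjI allI impI)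
      show "0 \<le> R" using aU by (simp add: achievable_def)
      fix e :: real assume e: "0 < e"
      obtain n0 where n0: "\<And>n. n \<ge> n0 \<Longrightarrow> coding_scheme (U n) (inputs n) (nat \<lceil>2 powr (real n * R)\<rceil>) (e/2)"
        using aU e unfolding achievable_def by (meson half_gt_zero)
      have "\<forall>\<^sub>F n in sequentially. Bb n < e/2" using order_tendstoD(2)[OF Bb_lim, of "e/2"] e by simp
      then obtain n1 where n1: "\<And>n. n \<ge> n1 \<Longrightarrow> Bb n < e/2" by (auto simp: eventually_sequentially)
      show "\<exists>n0. \<forall>n\<ge>n0. coding_scheme (V n) (inputs n) (nat \<lceil>2 powr (real n * R)\<rceil>) e"
      proof (intro exI allI impI)
        fix n assume "max n0 n1 \<le> n"
        hence "n \<ge> n0" "n \<ge> n1" by auto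
        have le: "e/2 + Bb n \<le> e" using n1[OF \<open>n \<ge> n1\<close>] by simp
        show "coding_scheme (V n) (inputs n) (nat \<lceil>2 powr (real n * R)\<rceil>) e"
          by (rule cs_mono[OF cs2[OF n0[OF \<open>n \<ge> n0\<close>]] le])
      qed
    qed
  qed
  have "{R. achievable U R} = {R. achievable V R}" using ach by blast
  hence P1: "capacity U = capacity V" unfolding capacity_def by simp

  define a where "a n = chan_info (U n) n" for n
  define b where "b n = chan_info (V n) n" for n
  define c where "c n = 2 / ln 2 + Bb n * log 2 (card (inputs n :: 'x list set))" for n
  have ab: "b n \<le> a n \<and> a n \<le> b n + c n" for n
  proof -
    let ?P = "{p :: 'x list pmf. set_pmf p \<subseteq> inputs n}"
    obtain xs :: "'x list" where "xs \<in> inputs n" using inputs_ne by blast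
    hence ne: "?P \<noteq> {}" by (auto intro!: exI[of _ "return_pmf xs"])
    have le1: "mutual_info (V n) p \<le> mutual_info (U n) p" if "p \<in> ?P" for p
      using chpair.M1[OF cp] that by auto
    have le2: "mutual_info (U n) p \<le> mutual_info (V n) p + c n" if "p \<in> ?P" for p
    proof -
      have pp: "set_pmf p \<subseteq> inputs n" using that by simp
      show ?thesis using chpair.M2[OF cp[OF pp] finite_inputs[of n] pp] unfolding c_def by (simp add: add.assoc)
    qed
    have bdd: "mutual_info (U n) p \<le> log 2 (card (inputs n :: 'x list set))" if "p \<in> ?P" for p
      using mutual_info_le[OF finite_inputs, of p n] that by auto
    show ?thesis
      using Sup_cmp[OF ne le1 le2 bdd] unfolding a_def b_def chan_info_img by auto
  qed
  have cn: "(\<lambda>n. c n / real n) \<longlonglongrightarrow> 0"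
  proof -
    have e: "c n / real n = 2 / ln 2 * inverse (real n) + Bb n * log 2 (CARD('x))" if "n > 0" for n
      using that unfolding c_def card_inputs
      by (simp add: log_nat_power field_simps)
    have "(\<lambda>n. 2 / ln 2 * inverse (real n) + Bb n * log 2 (CARD('x))) \<longlonglongrightarrow> 2 / ln 2 * 0 + 0 * log 2 (CARD('x))"
      by (intro tendsto_intros Bb_lim lim_inverse_n)
    hence "(\<lambda>n. 2 / ln 2 * inverse (real n) + Bb n * log 2 (CARD('x))) \<longlonglongrightarrow> 0" by simp
    thus ?thesis
      by (rule Lim_transform_eventually) (use e in \<open>auto simp: eventually_sequentially intro!: exI[of _ 1]\<close>)
  qed
  have d0: "(\<lambda>n. a n / real n - b n / real n) \<longlonglongrightarrow> 0"
  proof (rule tendsto_sandwich[where f="\<lambda>n. 0" and h="\<lambda>n. c n / real n"])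
    show "\<forall>\<^sub>F n in sequentially. 0 \<le> a n / real n - b n / real n"
      using ab by (auto simp: diff_divide_distrib[symmetric] intro!: divide_nonneg_nonneg)
    show "\<forall>\<^sub>F n in sequentially. a n / real n - b n / real n \<le> c n / real n"
    proof (intro always_eventually allI)
      fix n
      have "a n - b n \<le> c n" using ab[of n] by simp
      hence "(a n - b n) / real n \<le> c n / real n" by (rule divide_right_mono) simp
      thus "a n / real n - b n / real n \<le> c n / real n" by (simp add: diff_divide_distrib)
    qed
  qed (simp_all add: cn)
  have conv: "(\<lambda>n. a n / real n) \<longlonglongrightarrow> L \<longleftrightarrow> (\<lambda>n. b n / real n) \<longlonglongrightarrow> L" for L
  proof
    assume "(\<lambda>n. a n / real n) \<longlonglongrightarrow> L"
    from tendsto_diff[OF this d0] show "(\<lambda>n. b n / real n) \<longlonglongrightarrow> L" by simp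
  next
    assume "(\<lambda>n. b n / real n) \<longlonglongrightarrow> L"
    from tendsto_add[OF this d0] show "(\<lambda>n. a n / real n) \<longlonglongrightarrow> L" by simp
  qed
  have ex_eq: "info_rate_exists U \<longleftrightarrow> info_rate_exists V"
    unfolding info_rate_exists_def convergent_def using conv unfolding a_def b_def by simp
  have rate_eq: "info_rate U = info_rate V" if "info_rate_exists U"
  proof -
    from that obtain L where L: "(\<lambda>n. a n / real n) \<longlonglongrightarrow> L"
      unfolding info_rate_exists_def convergent_def a_def by blast
    hence L2: "(\<lambda>n. b n / real n) \<longlonglongrightarrow> L" using conv by simp
    show ?thesis unfolding info_rate_def using limI[OF L] limI[OF L2] unfolding a_def b_def by simp
  qed
  have P2: "(info_rate_exists U \<or> info_rate_exists V) \<longrightarrow>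
            info_rate_exists U \<and> info_rate_exists V \<and> info_rate U = info_rate V"
    using ex_eq rate_eq by blast

  have tail: "(\<lambda>n. measure_pmf.prob (joint_dist (p n) (U n))
        {x. \<epsilon> \<le> \<bar>info_dens (U n) (p n) (fst x) (snd x) / real n - info_dens (V n) (p n) (fst x) (f n (snd x)) / real n\<bar>})
        \<longlonglongrightarrow> 0"
    if p: "\<And>n. set_pmf (p n) \<subseteq> inputs n" and e: "\<epsilon> > 0" for p \<epsilon>
  proof (rule tendsto_sandwich[where f="\<lambda>n. 0" and h="\<lambda>n. Bb n + 2 / 2 powr (\<epsilon> * real n)"])
    show "\<forall>\<^sub>F n in sequentially. 0 \<le> measure_pmf.prob (joint_dist (p n) (U n))
        {x. \<epsilon> \<le> \<bar>info_dens (U n) (p n) (fst x) (snd x) / real n - info_dens (V n) (p n) (fst x) (f n (snd x)) / real n\<bar>}"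
      by simp
    show "(\<lambda>n. Bb n + 2 / 2 powr (\<epsilon> * real n)) \<longlonglongrightarrow> 0"
      using tendsto_add[OF Bb_lim pow_lim[OF e]] by simp
    show "\<forall>\<^sub>F n in sequentially. measure_pmf.prob (joint_dist (p n) (U n))
        {x. \<epsilon> \<le> \<bar>info_dens (U n) (p n) (fst x) (snd x) / real n - info_dens (V n) (p n) (fst x) (f n (snd x)) / real n\<bar>}
        \<le> Bb n + 2 / 2 powr (\<epsilon> * real n)"
    proof (unfold eventually_sequentially, intro exI[of _ 1] allI impI)
      fix n :: nat assume n: "1 \<le> n"
      hence npos: "0 < real n" by simp
      have "{x. \<epsilon> \<le> \<bar>info_dens (U n) (p n) (fst x) (snd x) / real n - info_dens (V n) (p n) (fst x) (f n (snd x)) / real n\<bar>}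
          = {x. \<epsilon> * real n \<le> \<bar>Dd (U n) (V n) (f n) (p n) x\<bar>}"
      proof -
        have "\<epsilon> \<le> \<bar>u / real n - v / real n\<bar> \<longleftrightarrow> \<epsilon> * real n \<le> \<bar>u - v\<bar>" for u v
        proof -
          have "\<bar>u / real n - v / real n\<bar> = \<bar>u - v\<bar> / real n"
            using npos by (simp add: diff_divide_distrib[symmetric])
          thus ?thesis using npos by (simp add: le_divide_eq)
        qed
        thus ?thesis by (simp add: Dd_def)
      qed
      also have "measure_pmf.prob (joint_dist (p n) (U n)) \<dots> \<le> Bb n + 2 / 2 powr (\<epsilon> * real n)"
        by (rule chpair.M3[OF cp[OF p]]) (use e npos in simp)
      finally show "measure_pmf.prob (joint_dist (p n) (U n))
        {x. \<epsilon> \<le> \<bar>info_dens (U n) (p n) (fst x) (snd x) / real n - info_dens (V n) (p n) (fst x) (f n (snd x)) / real n\<bar>}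
        \<le> Bb n + 2 / 2 powr (\<epsilon> * real n)" .
    qed
  qed simp
  have setU: "measure_pmf.prob (joint_dist (p n) (U n)) {(x, y). \<bar>info_dens (U n) (p n) x y / real n - I\<bar> > \<delta>}
      = measure_pmf.prob (joint_dist (p n) (U n)) {x. \<bar>info_dens (U n) (p n) (fst x) (snd x) / real n - I\<bar> > \<delta>}"
    for p n I \<delta> by (rule arg_cong[where f="measure_pmf.prob _"]) auto
  have setV: "measure_pmf.prob (joint_dist (p n) (V n)) {(x, y). \<bar>info_dens (V n) (p n) x y / real n - I\<bar> > \<delta>}
      = measure_pmf.prob (joint_dist (p n) (U n)) {x. \<bar>info_dens (V n) (p n) (fst x) (f n (snd x)) / real n - I\<bar> > \<delta>}"
    if p: "set_pmf (p n) \<subseteq> inputs n" for p n I \<delta>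
  proof -
    interpret chpair0 "U n" "V n" "f n" "p n"
      using cp[OF p] unfolding chpair_def by simp
    show ?thesis unfolding joint_map by (simp add: vimage_def case_prod_beta)
  qed
  have stab: "strictly_info_stable U \<longleftrightarrow> strictly_info_stable V"
  proof
    assume sU: "strictly_info_stable U"
    then obtain p where p: "\<And>n. set_pmf (p n) \<subseteq> inputs n" and
      tU: "\<And>\<delta>. \<delta> > 0 \<Longrightarrow> (\<lambda>n. measure_pmf.prob (joint_dist (p n) (U n))
                   {(x, y). \<bar>info_dens (U n) (p n) x y / real n - info_rate U\<bar> > \<delta>}) \<longlonglongrightarrow> 0"
      and exU: "info_rate_exists U"
      unfolding strictly_info_stable_def by blast
    have exV: "info_rate_exists V" using exU ex_eq by simp
    have req: "info_rate V = info_rate U" using rate_eq[OF exU] by simp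
    show "strictly_info_stable V" unfolding strictly_info_stable_def
    proof (intro conjI exI[of _ p] allI impI)
      show "info_rate_exists V" by (fact exV)
      show "set_pmf (p n) \<subseteq> inputs n" for n using p by simp
      fix \<delta> :: real assume d: "\<delta> > 0"
      have "(\<lambda>n. measure_pmf.prob (joint_dist (p n) (U n))
          {x. \<bar>info_dens (V n) (p n) (fst x) (f n (snd x)) / real n - info_rate U\<bar> > \<delta>}) \<longlonglongrightarrow> 0"
        by (rule abstract_transfer[OF tail[OF p] _ d]) (use tU setU in auto)
      thus "(\<lambda>n. measure_pmf.prob (joint_dist (p n) (V n))
          {(x, y). \<bar>info_dens (V n) (p n) x y / real n - info_rate V\<bar> > \<delta>}) \<longlonglongrightarrow> 0"
        using setV[where p=p, OF p] req by simp
    qed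
  next
    assume sV: "strictly_info_stable V"
    then obtain p where p: "\<And>n. set_pmf (p n) \<subseteq> inputs n" and
      tV: "\<And>\<delta>. \<delta> > 0 \<Longrightarrow> (\<lambda>n. measure_pmf.prob (joint_dist (p n) (V n))
                   {(x, y). \<bar>info_dens (V n) (p n) x y / real n - info_rate V\<bar> > \<delta>}) \<longlonglongrightarrow> 0"
      and exV: "info_rate_exists V"
      unfolding strictly_info_stable_def by blast
    have exU: "info_rate_exists U" using exV ex_eq by simp
    have req: "info_rate V = info_rate U" using rate_eq[OF exU] by simp
    show "strictly_info_stable U" unfolding strictly_info_stable_def
    proof (intro conjI exI[of _ p] allI impI)
      show "info_rate_exists U" by (fact exU)
      show "set_pmf (p n) \<subseteq> inputs n" for n using p by simp
      fix \<delta> :: real assume d: "\<delta> > 0"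
      have tail': "(\<lambda>n. measure_pmf.prob (joint_dist (p n) (U n))
        {x. \<epsilon> \<le> \<bar>info_dens (V n) (p n) (fst x) (f n (snd x)) / real n - info_dens (U n) (p n) (fst x) (snd x) / real n\<bar>})
        \<longlonglongrightarrow> 0" if "\<epsilon> > 0" for \<epsilon>
        using tail[OF p that] by (simp add: abs_minus_commute)
      have "(\<lambda>n. measure_pmf.prob (joint_dist (p n) (U n))
          {x. \<bar>info_dens (U n) (p n) (fst x) (snd x) / real n - info_rate V\<bar> > \<delta>}) \<longlonglongrightarrow> 0"
        by (rule abstract_transfer[OF tail' _ d]) (use tV setV[where p=p, OF p] in auto)
      thus "(\<lambda>n. measure_pmf.prob (joint_dist (p n) (U n))
          {(x, y). \<bar>info_dens (U n) (p n) x y / real n - info_rate U\<bar> > \<delta>}) \<longlonglongrightarrow> 0"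
        using setU req by simp
    qed
  qed
  show ?thesis using P1 P2 stab by blast
qed

end
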